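(* Let $\mu=4m^2>0$ and let $\mathcal{M}(\tilde z,a)$ be a unitary, crossing-symmetric $2\to2$ scattering amplitude of identical scalars of mass $m$ admitting the crossing-symmetric dispersive representation and the power series expansion about $\tilde z=0$ (converging on $|\tilde z|<1$) described in the context. Define $$f(\tilde z,a)=\frac{\mathcal{M}(\tilde z,a)-\alpha_0}{\alpha_1(a)\,a^2},\qquad \alpha_0=\mathcal{M}(0,a).$$ Then for real $a\in\left(-\frac{2\mu}{9},0\right)\cup\left(0,\frac{4\mu}{9}\right)$: (1) $|f(\tilde z,a)|\le\frac{|\tilde z|}{(1-|\tilde z|)^2}$ for all complex $\tilde z$ with $|\tilde z|<1$; (2) $|f(\tilde z,a)|\ge\frac{|\tilde z|}{(1+|\tilde z|)^2}$ for all real $\tilde z$ with $|\tilde z|<1$.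
   Context: Shifted Mandelstam variables $s_1=s-\mu/3$, $s_2=t-\mu/3$, $s_3=u-\mu/3$ satisfy $s_1+s_2+s_3=0$. Crossing-symmetric variables $(z,a)$, $a$ real, are defined by $s_k=a-\frac{a(z-z_k)^3}{z^3-1}$, $k=1,2,3$, with $z_k$ the cube roots of unity, and $\tilde z=z^3$. The amplitude is assumed to satisfy $$\mathcal{M}(\tilde z,a)=\alpha_0+\frac1\pi\int_{2\mu/3}^\infty\frac{ds_1'}{s_1'}\,\mathcal{A}\left(s_1';s_2^{(+)}(s_1',a)\right)H(s_1',\tilde z),$$ where $H(s_1',\tilde z)=\frac{27a^2\tilde z(2s_1'-3a)}{27a^3\tilde z-27a^2\tilde z s_1'-(1-\tilde z)^2(s_1')^3}$, $s_2^{(+)}(s_1',a)=-\frac{s_1'}{2}\left[1-\left(\frac{s_1'+3a}{s_1'-a}\right)^{1/2}\right]$, and $\mathcal{A}(s_1;s_2)$ is the $s$-channel absorptive part; and $\mathcal{M}(\tilde z,a)=\sum_{n\ge0}\alpha_n(a)a^{2n}\tilde z^n$ for $|\tilde z|<1$. Unitarity means: $\mathcal{A}\left(s_1;s_2^{(+)}(s_1,a)\right)=\Phi(s_1;\alpha)\sum_{\ell\ge0}(2\ell+2\alpha)a_\ell(s_1)C_\ell^{(\alpha)}\left(\sqrt{\xi(s_1,a)}\right)$ with $\alpha=(d-3)/2$ ($d$ the spacetime dimension), $\Phi>0$, $C_\ell^{(\alpha)}$ Gegenbauer polynomials, $\xi(s_1,a)=\left(1+\frac{2s_2^{(+)}(s_1,a)+2\mu/3}{s_1-2\mu/3}\right)^2$,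 and $0\le a_\ell(s_1)\le1$ for $s_1\ge2\mu/3$. *)

theory Defs
  imports "HOL-Analysis.Analysis"
begin

fun gegenbauer :: "real \<Rightarrow> nat \<Rightarrow> real \<Rightarrow> real" where
  "gegenbauer \<alpha> 0 x = 1"
| "gegenbauer \<alpha> (Suc 0) x = 2 * \<alpha> * x"
| "gegenbauer \<alpha> (Suc (Suc n)) x =
     (2 * x * (real n + 1 + \<alpha>) * gegenbauer \<alpha> (Suc n) x
      - (real n + 2 * \<alpha>) * gegenbauer \<alpha> n x) / (real n + 2)"

definition s2plus :: "real \<Rightarrow> real \<Rightarrow> real" where
  "s2plus s1 a = - (s1 / 2) * (1 - sqrt ((s1 + 3 * a) / (s1 - a)))"

definition xi :: "real \<Rightarrow> real \<Rightarrow> real \<Rightarrow> real" where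
  "xi \<mu> s1 a = (1 + (2 * s2plus s1 a + 2 * \<mu> / 3) / (s1 - 2 * \<mu> / 3)) ^ 2"

definition Hker :: "real \<Rightarrow> real \<Rightarrow> complex \<Rightarrow> complex" where
  "Hker a s z = (27 * of_real (a^2) * z * of_real (2 * s - 3 * a)) /
     (27 * of_real (a^3) * z - 27 * of_real (a^2) * z * of_real s - (1 - z)^2 * of_real (s^3))"

end

theory Submission
  imports Defs
begin


lemma geg_aux:
  assumes "\<alpha> \<ge> 1/2" "x \<ge> 1"
  shows "gegenbauer \<alpha> n x \<ge> 0 \<and> gegenbauer \<alpha> (Suc n) x \<ge> gegenbauer \<alpha> n x"
proof (induction n)
  case 0
  have "2 * \<alpha> * x \<ge> 1 * 1" using assms by (intro mult_mono) auto
  then show ?case by simp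
next
  case (Suc n)
  let ?a = "gegenbauer \<alpha> n x" and ?b = "gegenbauer \<alpha> (Suc n) x"
  have b0: "?b \<ge> 0" using Suc by linarith
  have h1: "2 * x * (real n + 1 + \<alpha>) * ?b \<ge> 2 * (real n + 1 + \<alpha>) * ?b"
    using assms b0 by (intro mult_right_mono) auto
  have h2: "(real n + 2 * \<alpha>) * ?a \<le> (real n + 2 * \<alpha>) * ?b"
    using assms Suc by (intro mult_left_mono) auto
  have "(real n + 2) * ?b \<le> 2 * x * (real n + 1 + \<alpha>) * ?b - (real n + 2 * \<alpha>) * ?a"
    using h1 h2 by (simp add: algebra_simps)
  then have "?b \<le> (2 * x * (real n + 1 + \<alpha>) * ?b - (real n + 2 * \<alpha>) * ?a) / (real n + 2)"
    by (simp add: field_simps)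
  then show ?case using b0 by simp
qed

lemma s2plus_ge:
  assumes mu: "\<mu> > 0" and a: "a \<in> {-(2 * \<mu> / 9)<..<0} \<union> {0<..<4 * \<mu> / 9}"
    and s: "s > 2 * \<mu> / 3"
  shows "s2plus s a \<ge> - \<mu> / 3"
proof -
  define r where "r = (s + 3 * a) / (s - a)"
  define q where "q = sqrt r"
  have sa: "s - a > 0" "s + 3 * a > 0" using a s mu by auto
  have r0: "r > 0" unfolding r_def using sa by simp
  have q0: "q \<ge> 0" and qq: "q^2 = r" unfolding q_def using r0 by auto
  have eq: "s2plus s a = - (s / 2) * (1 - q)" unfolding s2plus_def q_def r_def by simp
  show ?thesis
  proof (cases "a \<ge> 0")
    case True
    then have "r \<ge> 1" unfolding r_def using sa by (simp add: field_simps)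
    then have "q \<ge> 1" unfolding q_def by simp
    then have "s * (1 - q) \<le> 0" using s mu by (intro mult_nonneg_nonpos) auto
    then show ?thesis unfolding eq using mu by linarith
  next
    case False
    then have "r < 1" unfolding r_def using sa by (simp add: field_simps)
    have q1: "q \<le> 1" unfolding q_def using \<open>r < 1\<close> by simp
    have "r = q * q" using qq by (simp add: power2_eq_square)
    also have "\<dots> \<le> q * 1" using q0 q1 by (intro mult_left_mono) auto
    finally have "q \<ge> r" by simp
    have "(1 - q) * (1 + q) = 1 - r" using qq by (simp add: algebra_simps power2_eq_square)
    have "(1 - q) * (1 + r) \<le> (1 - q) * (1 + q)"
      using \<open>q \<ge> r\<close> q1 by (intro mult_left_mono) auto
    then have "(1 - q) * (1 + r) \<le> 1 - r" using \<open>(1 - q) * (1 + q) = 1 - r\<close> by simp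
    moreover have "1 + r = (2 * s + 2 * a) / (s - a)" "1 - r = - 4 * a / (s - a)"
      unfolding r_def using sa by (simp_all add: field_simps)
    then have "(1 + r) * (s - a) = 2 * s + 2 * a" "(1 - r) * (s - a) = - 4 * a"
      using sa by simp_all
    ultimately have "((1 - q) * (1 + r)) * (s - a) \<le> (1 - r) * (s - a)" using sa
      by (intro mult_right_mono) auto
    then have "(1 - q) * (2 * s + 2 * a) \<le> - 4 * a"
      using \<open>(1 + r) * (s - a) = 2 * s + 2 * a\<close> \<open>(1 - r) * (s - a) = - 4 * a\<close>
      by (simp add: mult.assoc)
    moreover have "s + a > 0" using a s mu by auto
    ultimately have "(1 - q) \<le> - 2 * a / (s + a)" by (simp add: field_simps)
    then have "(s/2) * (1 - q) \<le> (s/2) * (- 2 * a / (s + a))" using s mu by (intro mult_left_mono) auto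
    also have "\<dots> = - a * s / (s + a)" by simp
    also have "\<dots> \<le> \<mu> / 3"
    proof -
      have "s * (\<mu> + 3 * a) + \<mu> * a \<ge> 0"
      proof -
        have "s * (\<mu> + 3 * a) \<ge> (2 * \<mu> / 3) * (\<mu> + 3 * a)"
          using a s mu by (intro mult_right_mono) auto
        moreover have "\<mu> * (2 * \<mu> / 3 + 3 * a) \<ge> 0" using a mu by (intro mult_nonneg_nonneg) auto
        moreover have "(2 * \<mu> / 3) * (\<mu> + 3 * a) + \<mu> * a = \<mu> * (2 * \<mu> / 3 + 3 * a)"
          by (simp add: algebra_simps)
        ultimately show ?thesis by linarith
      qed
      then have "- a * s \<le> \<mu> / 3 * (s + a)" by (simp add: algebra_simps)
      then show ?thesis using \<open>s + a > 0\<close> by (subst pos_divide_le_eq) auto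
    qed
    finally show ?thesis unfolding eq by simp
  qed
qed



lemma Hker_eq:
  assumes "s \<noteq> 0"
  shows "complex_of_real (B / s) * Hker a s z =
    - complex_of_real (B / s * (27 * a^2 * (2 * s - 3 * a) / s^3)) * z /
      (1 - 2 * complex_of_real (1 - 27 * a^2 * (s - a) / (2 * s^3)) * z + z^2)"
proof -
  define D where "D = 1 - 2 * complex_of_real (1 - 27 * a^2 * (s - a) / (2 * s^3)) * z + z^2"
  have den: "27 * of_real (a^3) * z - 27 * of_real (a^2) * z * of_real s - (1 - z)^2 * of_real (s^3)
      = - complex_of_real (s^3) * D"
    unfolding D_def using assms
    by (simp add: field_simps power2_eq_square power3_eq_cube)
  show ?thesis unfolding Hker_def den D_def[symmetric] using assms
    by (simp add: field_simps)
qed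

lemma norm_D_ge:
  fixes z :: complex
  assumes "\<bar>c\<bar> \<le> 1" "cmod z < 1"
  shows "cmod (1 - 2 * complex_of_real c * z + z^2) \<ge> (1 - cmod z)^2"
proof -
  define e where "e = cis (arccos c)"
  have ce: "cos (arccos c) = c" using assms by (simp add: cos_arccos_abs)
  have ne: "cmod e = 1" unfolding e_def by simp
  have e2: "e * cnj e = 1" using complex_norm_square[of e] ne by simp
  have e3: "e + cnj e = 2 * complex_of_real c" unfolding e_def
    by (simp add: complex_eq_iff ce)
  have fac: "1 - 2 * complex_of_real c * z + z^2 = (1 - z * e) * (1 - z * cnj e)"
    using e2 e3[symmetric] by (simp add: algebra_simps power2_eq_square)
  have n1: "cmod (1 - z * e) \<ge> 1 - cmod z"
    using norm_triangle_ineq2[of 1 "z * e"] ne by (simp add: norm_mult)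
  have n2: "cmod (1 - z * cnj e) \<ge> 1 - cmod z"
    using norm_triangle_ineq2[of 1 "z * cnj e"] ne by (simp add: norm_mult)
  have "(1 - cmod z) * (1 - cmod z) \<le> cmod (1 - z * e) * cmod (1 - z * cnj e)"
    using n1 n2 assms by (intro mult_mono) auto
  then show ?thesis unfolding fac by (simp add: norm_mult power2_eq_square)
qed

lemma Dr_bounds:
  fixes x c :: real
  assumes "\<bar>c\<bar> \<le> 1"
  shows "(1 - \<bar>x\<bar>)^2 \<le> 1 - 2 * c * x + x^2" "1 - 2 * c * x + x^2 \<le> (1 + \<bar>x\<bar>)^2"
proof -
  have "\<bar>c * x\<bar> \<le> 1 * \<bar>x\<bar>" unfolding abs_mult using assms by (intro mult_right_mono) auto
  then have "\<bar>c * x\<bar> \<le> \<bar>x\<bar>" by simp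
  moreover have "x^2 = \<bar>x\<bar>^2" by simp
  ultimately show "(1 - \<bar>x\<bar>)^2 \<le> 1 - 2 * c * x + x^2" "1 - 2 * c * x + x^2 \<le> (1 + \<bar>x\<bar>)^2"
    by (auto simp: power2_eq_square algebra_simps abs_le_iff)
qed

lemma c_bound:
  fixes \<mu> a s :: real
  assumes mu: "\<mu> > 0" and a: "a \<in> {-(2 * \<mu> / 9)<..<0} \<union> {0<..<4 * \<mu> / 9}"
    and s: "s > 2 * \<mu> / 3"
  shows "\<bar>1 - 27 * a^2 * (s - a) / (2 * s^3)\<bar> \<le> 1"
proof -
  have s0: "s > 0" using s mu by linarith
  have k0: "27 * a^2 * (s - a) \<ge> 0" using a s mu by (intro mult_nonneg_nonneg) auto
  have "4 * s^3 - 27 * a^2 * (s - a) = (3 * a - 2 * s)^2 * (3 * a + s)"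
    by (simp add: algebra_simps power2_eq_square power3_eq_cube)
  moreover have "(3 * a - 2 * s)^2 * (3 * a + s) \<ge> 0" using a s mu by (intro mult_nonneg_nonneg) auto
  ultimately have k4: "27 * a^2 * (s - a) \<le> 4 * s^3" by linarith
  have p: "2 * s^3 > 0" using s0 by simp
  have "27 * a^2 * (s - a) / (2 * s^3) \<ge> 0" using k0 p by simp
  moreover have "27 * a^2 * (s - a) / (2 * s^3) \<le> 2" using k4 p by (simp add: divide_le_eq)
  ultimately show ?thesis by linarith
qed



lemma series_limit:
  fixes cc :: "nat \<Rightarrow> complex" and Mf :: "complex \<Rightarrow> complex"
  assumes ser: "\<And>z. cmod z < 1 \<Longrightarrow> (\<lambda>n. cc n * z^n) sums Mf z"
  shows "((\<lambda>y::real. (Mf (of_real y) - Mf 0) / of_real y) \<longlongrightarrow> cc 1) (at 0)"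
proof -
  have M0: "Mf 0 = cc 0"
  proof -
    have "(\<lambda>n. cc n * 0^n) sums Mf 0" using ser[of 0] by simp
    then have "Mf 0 = (\<Sum>n. cc n * 0^n)" by (simp add: sums_unique)
    then show ?thesis by simp
  qed
  have g: "(\<lambda>n. cc (Suc n) * z^n) sums ((Mf z - cc 0) / z)" if "cmod z < 1" "z \<noteq> 0" for z
  proof -
    have "(\<lambda>n. cc (Suc n) * z^(Suc n)) sums (Mf z - cc 0)"
      using ser[OF that(1)] by (subst sums_Suc_iff) simp
    from sums_mult[OF this, of "1 / z"] show ?thesis
      using that(2) by (simp add: field_simps)
  qed
  define G where "G z = (\<Sum>n. cc (Suc n) * z^n)" for z
  have summ: "summable (\<lambda>n. cc (Suc n) * (1/2 :: complex)^n)"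
    using g[of "1/2"] by (auto simp: sums_iff)
  have "isCont G 0" unfolding G_def by (rule isCont_powser[OF summ]) simp
  moreover have "((\<lambda>y::real. complex_of_real y) \<longlongrightarrow> 0) (at 0)"
    by (intro tendsto_eq_intros) auto
  ultimately have "((\<lambda>y::real. G (of_real y)) \<longlongrightarrow> G 0) (at 0)"
    using isCont_tendsto_compose by fastforce
  moreover have "G 0 = cc 1" unfolding G_def using powser_zero[of "\<lambda>n. cc (Suc n)"] by simp
  moreover have "eventually (\<lambda>y::real. G (of_real y) = (Mf (of_real y) - Mf 0) / of_real y) (at 0)"
  proof -
    have "eventually (\<lambda>y::real. y \<in> ball 0 1 - {0}) (at 0)"
      by (rule eventually_at_in_open) auto
    then show ?thesis
    proof (rule eventually_mono)
      fix y :: real assume "y \<in> ball 0 1 - {0}"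
      then have "cmod (of_real y) < 1" "complex_of_real y \<noteq> 0" by auto
      from sums_unique[OF g[OF this]] show "G (of_real y) = (Mf (of_real y) - Mf 0) / of_real y"
        unfolding G_def M0 by simp
    qed
  qed
  ultimately show ?thesis using Lim_transform_eventually by fastforce
qed

theorem theorem8:
  fixes m \<mu> a :: real
    and d :: nat
    and M :: "complex \<Rightarrow> real \<Rightarrow> complex"
    and \<alpha>c :: "nat \<Rightarrow> real \<Rightarrow> complex"
    and A :: "real \<Rightarrow> real \<Rightarrow> real"
    and \<Phi> :: "real \<Rightarrow> real"
    and pw :: "nat \<Rightarrow> real \<Rightarrow> real"
  assumes mu_def: "\<mu> = 4 * m^2" and mu_pos: "\<mu> > 0"
    and dim: "d \<ge> 4"
    and a_range: "a \<in> {-(2 * \<mu> / 9)<..<0} \<union> {0<..<4 * \<mu> / 9}"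
    \<comment> \<open>crossing-symmetric dispersive representation\<close>
    and disp_int: "\<And>z. cmod z < 1 \<Longrightarrow>
       (\<lambda>s. complex_of_real (A s (s2plus s a) / s) * Hker a s z) integrable_on {2 * \<mu> / 3..}"
    and disp: "\<And>z. cmod z < 1 \<Longrightarrow>
       M z a = \<alpha>c 0 a + complex_of_real (1 / pi) *
         integral {2 * \<mu> / 3..} (\<lambda>s. complex_of_real (A s (s2plus s a) / s) * Hker a s z)"
    \<comment> \<open>power series expansion about z~ = 0\<close>
    and series: "\<And>z. cmod z < 1 \<Longrightarrow>
       (\<lambda>n. \<alpha>c n a * complex_of_real (a ^ (2 * n)) * z ^ n) sums M z a"
    \<comment> \<open>unitarity\<close>
    and Phi_pos: "\<And>s. s \<ge> 2 * \<mu> / 3 \<Longrightarrow> \<Phi> s > 0"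
    and pw_bounds: "\<And>l s. s \<ge> 2 * \<mu> / 3 \<Longrightarrow> 0 \<le> pw l s \<and> pw l s \<le> 1"
    and unitarity: "\<And>s. s > 2 * \<mu> / 3 \<Longrightarrow>
       (\<lambda>l. \<Phi> s * ((2 * real l + 2 * ((real d - 3) / 2)) * pw l s *
              gegenbauer ((real d - 3) / 2) l (sqrt (xi \<mu> s a))))
         sums A s (s2plus s a)"
    \<comment> \<open>f is well defined\<close>
    and alpha1_nz: "\<alpha>c 1 a \<noteq> 0"
  shows "(\<forall>z. cmod z < 1 \<longrightarrow>
            cmod ((M z a - M 0 a) / (\<alpha>c 1 a * complex_of_real (a^2)))
              \<le> cmod z / (1 - cmod z)^2)
       \<and> (\<forall>x::real. \<bar>x\<bar> < 1 \<longrightarrow>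
            cmod ((M (complex_of_real x) a - M 0 a) / (\<alpha>c 1 a * complex_of_real (a^2)))
              \<ge> \<bar>x\<bar> / (1 + \<bar>x\<bar>)^2)"
  proof -
  have a0: "a \<noteq> 0" using a_range by auto
  define S where "S = {2 * \<mu> / 3<..}"
  define F where "F z s = complex_of_real (A s (s2plus s a) / s) * Hker a s z" for z s
  define W where "W s = A s (s2plus s a) / s * (27 * a^2 * (2 * s - 3 * a) / s^3)" for s
  define c where "c s = 1 - 27 * a^2 * (s - a) / (2 * s^3)" for s
  define Dr where "Dr s x = 1 - 2 * c s * x + x^2" for s x :: real
  define u where "u x s = W s / Dr s x" for x s
  define L where "L x = integral S (u x)" for x
  have sS: "s > 0" "s > 2 * \<mu> / 3" if "s \<in> S" for s using that mu_pos unfolding S_def by auto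
  have A0: "A s (s2plus s a) \<ge> 0" if "s \<in> S" for s
  proof -
    have s: "s > 2 * \<mu> / 3" using sS[OF that] by simp
    have t0: "(2 * s2plus s a + 2 * \<mu> / 3) / (s - 2 * \<mu> / 3) \<ge> 0"
      using s2plus_ge[OF mu_pos a_range s] s by simp
    have "sqrt (xi \<mu> s a) = \<bar>1 + (2 * s2plus s a + 2 * \<mu> / 3) / (s - 2 * \<mu> / 3)\<bar>"
      unfolding xi_def by simp
    then have x1: "sqrt (xi \<mu> s a) \<ge> 1" using t0 by simp
    have al: "(real d - 3) / 2 \<ge> 1/2" using dim by simp
    show ?thesis
    proof (rule sums_le[OF _ sums_zero unitarity[OF s]])
      fix l
      show "0 \<le> \<Phi> s * ((2 * real l + 2 * ((real d - 3) / 2)) * pw l s *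
              gegenbauer ((real d - 3) / 2) l (sqrt (xi \<mu> s a)))"
        using Phi_pos[of s] pw_bounds[of s l] geg_aux[OF al x1, of l] s dim
        by (intro mult_nonneg_nonneg) auto
    qed
  qed
  have W0: "W s \<ge> 0" if "s \<in> S" for s
    unfolding W_def using A0[OF that] sS[OF that] a_range
    by (intro mult_nonneg_nonneg divide_nonneg_nonneg) auto
  have cb: "\<bar>c s\<bar> \<le> 1" if "s \<in> S" for s
    unfolding c_def using c_bound[OF mu_pos a_range sS(2)[OF that]] .
  have Fpt: "F z s = - complex_of_real (W s) * z / (1 - 2 * complex_of_real (c s) * z + z^2)"
    if "s \<in> S" for s z
    unfolding F_def W_def c_def using Hker_eq[of s] sS[OF that] by simp
  have Drb: "(1 - \<bar>x\<bar>)^2 \<le> Dr s x" "Dr s x \<le> (1 + \<bar>x\<bar>)^2" if "s \<in> S" for s x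
    unfolding Dr_def using Dr_bounds[OF cb[OF that]] by auto
  have Drpos: "Dr s x > 0" if "s \<in> S" "\<bar>x\<bar> < 1" for s x
    using Drb(1)[OF that(1), of x] that(2) by (smt (verit) zero_less_power)
  have Freal: "F (of_real x) s = of_real (- x * u x s)" if "s \<in> S" for s x
    unfolding Fpt[OF that] u_def Dr_def by simp
  have neg: "negligible ({2 * \<mu> / 3..} - S)"
    by (rule negligible_subset[OF negligible_sing[of "2 * \<mu> / 3"]]) (auto simp: S_def)
  have FintS: "F z integrable_on S" if "cmod z < 1" for z
  proof (rule integrable_spike_set[OF disp_int[OF that, folded F_def]])
    show "negligible {x \<in> {2 * \<mu> / 3..} - S. F z x \<noteq> 0}" by (rule negligible_subset[OF neg]) auto
    have "{x \<in> S - {2 * \<mu> / 3..}. F z x \<noteq> 0} = {}" by (auto simp: S_def)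
    then show "negligible {x \<in> S - {2 * \<mu> / 3..}. F z x \<noteq> 0}" by (metis negligible_empty)
  qed
  have Mrep: "M z a - M 0 a = complex_of_real (1 / pi) * integral S (F z)" if "cmod z < 1" for z
  proof -
    have "integral {2 * \<mu> / 3..} (F z) = integral S (F z)"
    proof (rule integral_spike_set)
      show "negligible {x \<in> {2 * \<mu> / 3..} - S. F z x \<noteq> 0}" by (rule negligible_subset[OF neg]) auto
      have "{x \<in> S - {2 * \<mu> / 3..}. F z x \<noteq> 0} = {}" by (auto simp: S_def)
      then show "negligible {x \<in> S - {2 * \<mu> / 3..}. F z x \<noteq> 0}" by (metis negligible_empty)
    qed
    moreover have "M 0 a = \<alpha>c 0 a" using disp[of 0] by (simp add: Hker_def)
    ultimately show ?thesis using disp[OF that] unfolding F_def by simp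
  qed
  have uint: "u x integrable_on S" if "\<bar>x\<bar> < 1" "x \<noteq> 0" for x
  proof -
    have "(Re \<circ> F (of_real x)) integrable_on S"
      using FintS[of "of_real x"] that by (intro integrable_linear bounded_linear_Re) auto
    then have "(\<lambda>s. (- 1 / x) *\<^sub>R (Re \<circ> F (of_real x)) s) integrable_on S"
      by (rule integrable_cmul)
    then show ?thesis
      by (rule integrable_eq) (use that in \<open>simp add: Freal\<close>)
  qed
  have intreal: "integral S (F (of_real x)) = of_real (- x * L x)" if "\<bar>x\<bar> < 1" "x \<noteq> 0" for x
  proof -
    have "integral S (F (of_real x)) = integral S (complex_of_real \<circ> (\<lambda>s. (- x) *\<^sub>R u x s))"
      by (rule integral_cong) (simp add: Freal)
    also have "\<dots> = of_real (integral S (\<lambda>s. (- x) *\<^sub>R u x s))"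
      by (rule integral_linear) (use integrable_cmul[OF uint[OF that], of "- x"] in \<open>auto intro: bounded_linear_of_real\<close>)
    also have "\<dots> = of_real (- x * L x)" unfolding L_def by simp
    finally show ?thesis .
  qed
  have L0: "L x \<ge> 0" if "\<bar>x\<bar> < 1" "x \<noteq> 0" for x
    unfolding L_def
  proof (rule integral_nonneg[OF uint[OF that]])
    fix s assume "s \<in> S"
    then show "0 \<le> u x s" unfolding u_def using W0 Drpos that by (simp add: less_imp_le)
  qed
  define \<beta> where "\<beta> = \<alpha>c 1 a * complex_of_real (a^2)"
  have \<beta>0: "\<beta> \<noteq> 0" unfolding \<beta>_def using alpha1_nz a0 by simp
  have lim1: "((\<lambda>y::real. (M (of_real y) a - M 0 a) / of_real y) \<longlongrightarrow> \<beta>) (at 0)"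
    unfolding \<beta>_def
    using series_limit[of "\<lambda>n. \<alpha>c n a * complex_of_real (a ^ (2 * n))" "\<lambda>z. M z a"] series
    by simp
  have ev: "eventually (\<lambda>y::real. \<bar>y\<bar> < 1 \<and> y \<noteq> 0) (at 0)"
  proof -
    have "eventually (\<lambda>y::real. y \<in> ball 0 1 - {0}) (at 0)"
      by (rule eventually_at_in_open) auto
    then show ?thesis by (rule eventually_mono) auto
  qed
  have lim2: "((\<lambda>y. complex_of_real (- L y / pi)) \<longlongrightarrow> \<beta>) (at (0::real))"
  proof (rule Lim_transform_eventually[OF lim1])
    show "\<forall>\<^sub>F y in at 0. (M (of_real y) a - M 0 a) / of_real y = complex_of_real (- L y / pi)"
      using ev
    proof (rule eventually_mono)
      fix y :: real assume y: "\<bar>y\<bar> < 1 \<and> y \<noteq> 0"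
      then show "(M (of_real y) a - M 0 a) / of_real y = complex_of_real (- L y / pi)"
        using Mrep[of "of_real y"] intreal[of y] by simp
    qed
  qed
  define b where "b = - pi * Re \<beta>"
  have Im0: "Im \<beta> = 0"
  proof -
    have "((\<lambda>y. Im (complex_of_real (- L y / pi))) \<longlongrightarrow> Im \<beta>) (at (0::real))"
      by (rule tendsto_Im[OF lim2])
    then have "((\<lambda>y. 0) \<longlongrightarrow> Im \<beta>) (at (0::real))" by simp
    then show ?thesis by (simp add: tendsto_const_iff)
  qed
  have \<beta>b: "\<beta> = complex_of_real (- b / pi)" unfolding b_def using Im0 by (simp add: complex_eq_iff)
  have limL: "(L \<longlongrightarrow> b) (at (0::real))"
  proof -
    have "((\<lambda>y. Re (complex_of_real (- L y / pi))) \<longlongrightarrow> Re \<beta>) (at (0::real))"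
      by (rule tendsto_Re[OF lim2])
    then have "((\<lambda>y. - pi * (- L y / pi)) \<longlongrightarrow> - pi * Re \<beta>) (at (0::real))"
      by (intro tendsto_mult tendsto_const) simp
    then show ?thesis unfolding b_def by simp
  qed
  have b0: "b \<ge> 0"
    by (rule tendsto_lowerbound[OF limL]) (use ev L0 in \<open>auto elim: eventually_mono\<close>)
  have bpos: "b > 0" using b0 \<beta>0 \<beta>b by (cases "b = 0") auto
  have fdef: "(M z a - M 0 a) / (\<alpha>c 1 a * complex_of_real (a^2)) = complex_of_real (1 / pi) * integral S (F z) / complex_of_real (- b / pi)"
    if "cmod z < 1" for z
    using Mrep[OF that] \<beta>b unfolding \<beta>_def by simp
  have part1: "cmod ((M z a - M 0 a) / (\<alpha>c 1 a * complex_of_real (a^2))) \<le> cmod z / (1 - cmod z)^2"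
    if z: "cmod z < 1" for z
  proof -
    define K where "K y = (1 + \<bar>y\<bar>)^2 * cmod z / (1 - cmod z)^2" for y :: real
    have bnd: "cmod (integral S (F z)) \<le> K y * L y" if y: "\<bar>y\<bar> < 1" "y \<noteq> 0" for y
    proof -
      have "cmod (integral S (F z)) \<le> integral S (\<lambda>s. K y * u y s)"
      proof (rule Henstock_Kurzweil_Integration.integral_norm_bound_integral)
        show "F z integrable_on S" by (rule FintS[OF z])
        show "(\<lambda>s. K y * u y s) integrable_on S" using uint[OF y] by (rule integrable_on_mult_right)
        fix s assume s: "s \<in> S"
        have zpos: "1 - cmod z > 0" using z by simp
        have Dn: "cmod (1 - 2 * complex_of_real (c s) * z + z^2) \<ge> (1 - cmod z)^2"
          by (rule norm_D_ge[OF cb[OF s] z])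
        have Dp: "(1 - cmod z)^2 > 0" using zpos by simp
        have "cmod (F z s) = W s * cmod z / cmod (1 - 2 * complex_of_real (c s) * z + z^2)"
          unfolding Fpt[OF s] using W0[OF s] by (simp add: norm_mult norm_divide)
        also have "\<dots> \<le> W s * cmod z / (1 - cmod z)^2"
        proof (rule divide_left_mono[OF Dn])
          show "0 \<le> W s * cmod z" using W0[OF s] by simp
          show "0 < cmod (1 - 2 * complex_of_real (c s) * z + z^2) * (1 - cmod z)^2"
            using Dn Dp by (intro mult_pos_pos) auto
        qed
        also have "W s = u y s * Dr s y" unfolding u_def using Drpos[OF s y(1)] by simp
        also have "u y s * Dr s y \<le> u y s * (1 + \<bar>y\<bar>)^2"
          using Drb(2)[OF s, of y] W0[OF s] Drpos[OF s y(1)] unfolding u_def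
          by (intro mult_left_mono) auto
        then have "u y s * Dr s y * cmod z / (1 - cmod z)^2 \<le> u y s * (1 + \<bar>y\<bar>)^2 * cmod z / (1 - cmod z)^2"
          using Dp by (intro divide_right_mono mult_right_mono) auto
        also have "\<dots> = K y * u y s" unfolding K_def by simp
        finally show "cmod (F z s) \<le> K y * u y s" .
      qed
      also have "\<dots> = K y * L y" unfolding L_def by simp
      finally show ?thesis .
    qed
    have limK: "((\<lambda>y. K y * L y) \<longlongrightarrow> K 0 * b) (at (0::real))"
      unfolding K_def using z by (intro tendsto_intros limL) auto
    have "cmod (integral S (F z)) \<le> K 0 * b"
      by (rule tendsto_lowerbound[OF limK]) (use ev bnd in \<open>auto elim: eventually_mono\<close>)
    then have "cmod (integral S (F z)) \<le> b * (cmod z / (1 - cmod z)^2)" unfolding K_def by (simp add: mult.commute)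
    then show ?thesis unfolding fdef[OF z] using bpos
      by (simp add: norm_mult norm_divide field_simps)
  qed
  have part2: "cmod ((M (complex_of_real x) a - M 0 a) / (\<alpha>c 1 a * complex_of_real (a^2))) \<ge> \<bar>x\<bar> / (1 + \<bar>x\<bar>)^2"
    if x: "\<bar>x\<bar> < 1" for x
  proof (cases "x = 0")
    case True then show ?thesis by simp
  next
    case False
    define K where "K y = (1 - \<bar>y\<bar>)^2 / (1 + \<bar>x\<bar>)^2" for y :: real
    have bnd: "K y * L y \<le> L x" if y: "\<bar>y\<bar> < 1" "y \<noteq> 0" for y
    proof -
      have "integral S (\<lambda>s. K y * u y s) \<le> L x" unfolding L_def
      proof (rule integral_le)
        show "(\<lambda>s. K y * u y s) integrable_on S" using uint[OF y] by (rule integrable_on_mult_right)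
        show "u x integrable_on S" by (rule uint[OF x False])
        fix s assume s: "s \<in> S"
        have p1: "Dr s x > 0" "Dr s y > 0" using Drpos[OF s] x y by auto
        have "K y * u y s = W s * ((1 - \<bar>y\<bar>)^2 / Dr s y) / (1 + \<bar>x\<bar>)^2"
          unfolding K_def u_def by (simp add: mult.commute)
        also have "\<dots> \<le> W s * 1 / (1 + \<bar>x\<bar>)^2"
          using Drb(1)[OF s, of y] p1 W0[OF s]
          by (intro divide_right_mono mult_left_mono) auto
        also have "\<dots> \<le> W s / Dr s x"
          using Drb(2)[OF s, of x] p1 W0[OF s] by (simp add: divide_left_mono)
        finally show "K y * u y s \<le> u x s" unfolding u_def .
      qed
      then show ?thesis unfolding L_def by simp
    qed
    have limK: "((\<lambda>y. K y * L y) \<longlongrightarrow> K 0 * b) (at (0::real))"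
      unfolding K_def by (intro tendsto_intros limL) auto
    have "K 0 * b \<le> L x"
      by (rule tendsto_upperbound[OF limK]) (use ev bnd in \<open>auto elim: eventually_mono\<close>)
    then have Lx: "b / (1 + \<bar>x\<bar>)^2 \<le> L x" unfolding K_def by simp
    have "(M (complex_of_real x) a - M 0 a) / (\<alpha>c 1 a * complex_of_real (a^2)) = complex_of_real (x * L x / b)"
    proof -
      have "(M (complex_of_real x) a - M 0 a) / (\<alpha>c 1 a * complex_of_real (a^2))
          = complex_of_real (1 / pi) * integral S (F (of_real x)) / complex_of_real (- b / pi)"
        using fdef[of "of_real x"] x by simp
      also have "\<dots> = complex_of_real (1 / pi) * of_real (- x * L x) / complex_of_real (- b / pi)"
        using intreal[OF x False] by simp
      also have "\<dots> = complex_of_real (x * L x / b)" using bpos by (simp add: field_simps)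
      finally show ?thesis .
    qed
    then have "cmod ((M (complex_of_real x) a - M 0 a) / (\<alpha>c 1 a * complex_of_real (a^2))) = \<bar>x\<bar> * L x / b"
      using L0[OF x False] bpos by (simp only: norm_of_real abs_mult abs_divide)
    moreover have "\<bar>x\<bar> / (1 + \<bar>x\<bar>)^2 \<le> \<bar>x\<bar> * L x / b"
    proof -
      have "\<bar>x\<bar> * (b / (1 + \<bar>x\<bar>)^2) \<le> \<bar>x\<bar> * L x" using Lx by (intro mult_left_mono) auto
      then show ?thesis using bpos by (simp add: field_simps)
    qed
    ultimately show ?thesis by simp
  qed
  show ?thesis using part1 part2 by blast
qed

end
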